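(* Every point $\zeta\in\partial(\Gamma,\mathcal{P})$ has a strict $\mathcal{G}$-coding (either a strict conical coding of $\zeta$ or a strict parabolic coding of $\zeta$).
   Context: Setup. $\Gamma$ is a finitely generated group hyperbolic relative to a finite nonempty collection $\mathcal{P}$ of infinite subgroups, with $(\Gamma,\mathcal{P})$ non-elementary, and $\mathcal{S}$ a finite symmetric generating set with $P\cap\mathcal{S}$ generating $P$ for each $P\in\mathcal{P}$. $X$ is the Groves–Manning cusped space (the Cayley graph with combinatorial horoballs glued along the cosets $gP$), a locally finite graph with unit edges, metric $d_X$, $\delta$-hyperbolic for a fixed integer $\delta\ge1$; $|g|_X=d_X(\mathrm{id},g)$. Its Gromov boundary is the Bowditch boundary $\partial(\Gamma,\mathcal{P})$, with a fixed metric $d_\partial$ (balls $B_r$, neighborhoods $N_r$, closed neighborhoods $\overline N_r$, $\operatorname{diam}$ w.r.t. $d_\partial$). $\Pi$ is the finite set of points fixed by groups in $\mathcal{P}$, $\Gamma_p$ the group fixing $p\in\Pi$; translates $gp$ are parabolic points, and all other boundary points are conical limit points. $D>0$ is such that any distinct $x,y$ have some $g\in\Gamma$ with $d_\partial(gx,gy)>D$; for $p\in\Pi$, $K_p\subset\partial(\Gamma,\mathcal{P})\setminus\{p\}$ is compact with $\Gamma_pK_p=\partial(\Gamma,\mathcal{P})\setminus\{p\}$, and $D_\Pi>0$ satisfies $D_\Pi<\operatorname{diam}K_p$, $D_\Pi<d_\partial(K_p,p)$ for all $p$. Automaton. Fix $0<\varepsilon<\min(D/5,D_\Pi/5)$,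 a finite set $Z\subset\partial(\Gamma,\mathcal{P})$, and for each $z\in Z$ open sets $V(z),W(z),\hat V(z),\hat W(z)$ and a set $L(z)\subset\Gamma$ such that: if $z$ is conical, $L(z)=\{\alpha_z\}$, $\hat V(z)=\alpha_z^{-1}V(z)$, $\hat W(z)=\alpha_z^{-1}W(z)$; if $z=gp$ is parabolic ($p\in\Pi$), then $L(z)=g\Gamma_p\setminus F_z$ for a finite set $F_z$, $\hat V(z)\subset\hat W(z)\subset\partial(\Gamma,\mathcal{P})\setminus\{p\}$ and $p\notin\overline N_\varepsilon(\hat W(z))$; the sets $V(z)$, $z\in Z$, cover $\partial(\Gamma,\mathcal{P})$; and for all $z\in Z$: (C1) $\operatorname{diam}W(z)<\varepsilon$; (C2) $\operatorname{diam}\hat W(z)>4\varepsilon$; (C3) $\overline N_{2\varepsilon}(\hat V(z))\subset\hat W(z)$; (C4) $W(z)=\{z\}\cup\bigcup_{\alpha\in L(z)}\alpha\hat W(z)$; (C5) $V(z)=\{z\}\cup\bigcup_{\alpha\in L(z)}\alpha\hat V(z)$ and $\overline{V(z)}\subset W(z)$; (C6) for all $y,z\in Z$, $\overline{\hat V(z)}\cap\overline{V(y)}=\emptyset$ iff $\hat V(z)\cap V(y)=\emptyset$. The automaton $\mathcal{G}$ is the directed graph with vertex set $Z$ where, for $y,z\in Z$, there is no edge from $z$ to $y$ if $\hat V(z)\cap V(y)=\emptyset$, and otherwise there is exactly one edge from $z$ to $y$ labeled $\alpha$ for each $\alpha\in L(z)$. For an edge $e$, $\iota(e),\tau(e),\mathrm{Lab}(e)$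 denote its initial vertex, terminal vertex and label. Codings. A strict conical coding is an infinite edge path $\mathbf e=(e_k)_{k\ge1}$ in $\mathcal{G}$; writing $\alpha_k=\mathrm{Lab}(e_k)$, $z_k=\tau(e_k)$ ($k\ge1$), $z_0=\iota(e_1)$, it is a strict coding of $\zeta$ if $\zeta\in\bigcap_{k\ge0}\alpha_1\cdots\alpha_k\overline{W(z_k)}$. A strict parabolic coding is a finite edge path $e_1,\dots,e_n$ ($n\ge0$; for $n=0$ it is a single vertex) whose final vertex $q$ is parabolic; it is a strict coding of $\zeta$ if $\zeta=\alpha_1\cdots\alpha_nq$. *)

theory Defs
  imports "HOL-Analysis.Analysis" "HOL-Algebra.Generated_Groups" "HOL-Algebra.Coset"
begin

definition nbhd :: "real \<Rightarrow> 'a::metric_space set \<Rightarrow> 'a set" where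
  "nbhd r A = {x. \<exists>a\<in>A. dist x a < r}"

definition cnbhd :: "real \<Rightarrow> 'a::metric_space set \<Rightarrow> 'a set" where
  "cnbhd r A = {x. A \<noteq> {} \<and> infdist x A \<le> r}"

definition stab :: "('g,'m) monoid_scheme \<Rightarrow> ('g \<Rightarrow> 'b \<Rightarrow> 'b) \<Rightarrow> 'b \<Rightarrow> 'g set" where
  "stab G act p = {g \<in> carrier G. act g p = p}"

definition parabolic_pts :: "('g,'m) monoid_scheme \<Rightarrow> ('g \<Rightarrow> 'b \<Rightarrow> 'b) \<Rightarrow> 'b set \<Rightarrow> 'b set" where
  "parabolic_pts G act Pp = {act g p | g p. g \<in> carrier G \<and> p \<in> Pp}"

type_synonym ('b,'g) edge = "'b \<times> 'g \<times> 'b"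

definition src :: "('b,'g) edge \<Rightarrow> 'b" where "src e = fst e"
definition lab :: "('b,'g) edge \<Rightarrow> 'g" where "lab e = fst (snd e)"
definition tgt :: "('b,'g) edge \<Rightarrow> 'b" where "tgt e = snd (snd e)"

definition automaton_edges ::
  "'b set \<Rightarrow> ('b \<Rightarrow> 'g set) \<Rightarrow> ('b \<Rightarrow> 'b set) \<Rightarrow> ('b \<Rightarrow> 'b set) \<Rightarrow> ('b,'g) edge set" where
  "automaton_edges Z L Vh V =
     {(z, \<alpha>, y). z \<in> Z \<and> y \<in> Z \<and> \<alpha> \<in> L z \<and> Vh z \<inter> V y \<noteq> {}}"

text \<open>Infinite edge paths are indexed from 0: e 0 is the paper's e_1.
  label_prod G e k = alpha_1 ... alpha_k, vtx e k = z_k.\<close>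
fun label_prod :: "('g,'m) monoid_scheme \<Rightarrow> (nat \<Rightarrow> ('b,'g) edge) \<Rightarrow> nat \<Rightarrow> 'g" where
  "label_prod G e 0 = \<one>\<^bsub>G\<^esub>"
| "label_prod G e (Suc k) = label_prod G e k \<otimes>\<^bsub>G\<^esub> lab (e k)"

definition vtx :: "(nat \<Rightarrow> ('b,'g) edge) \<Rightarrow> nat \<Rightarrow> 'b" where
  "vtx e k = (if k = 0 then src (e 0) else tgt (e (k - 1)))"

definition strict_conical_coding ::
  "('g,'m) monoid_scheme \<Rightarrow> ('g \<Rightarrow> 'b \<Rightarrow> 'b) \<Rightarrow> ('b,'g) edge set \<Rightarrow> ('b \<Rightarrow> 'b::topological_space set)
   \<Rightarrow> (nat \<Rightarrow> ('b,'g) edge) \<Rightarrow> 'b \<Rightarrow> bool" where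
  "strict_conical_coding G act E W e \<zeta> \<longleftrightarrow>
     (\<forall>k. e k \<in> E) \<and> (\<forall>k. tgt (e k) = src (e (Suc k))) \<and>
     (\<forall>k. \<zeta> \<in> act (label_prod G e k) ` closure (W (vtx e k)))"

fun list_prod :: "('g,'m) monoid_scheme \<Rightarrow> 'g list \<Rightarrow> 'g" where
  "list_prod G [] = \<one>\<^bsub>G\<^esub>"
| "list_prod G (x # xs) = x \<otimes>\<^bsub>G\<^esub> list_prod G xs"

definition is_path_from :: "('b,'g) edge set \<Rightarrow> 'b \<Rightarrow> ('b,'g) edge list \<Rightarrow> bool" where
  "is_path_from E q0 es \<longleftrightarrow> set es \<subseteq> E \<and> (es \<noteq> [] \<longrightarrow> src (hd es) = q0) \<and>
     (\<forall>i. Suc i < length es \<longrightarrow> tgt (es ! i) = src (es ! Suc i))"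

definition final_vtx :: "'b \<Rightarrow> ('b,'g) edge list \<Rightarrow> 'b" where
  "final_vtx q0 es = (if es = [] then q0 else tgt (last es))"

definition strict_parabolic_coding ::
  "('g,'m) monoid_scheme \<Rightarrow> ('g \<Rightarrow> 'b \<Rightarrow> 'b) \<Rightarrow> 'b set \<Rightarrow> 'b set \<Rightarrow> ('b,'g) edge set
   \<Rightarrow> 'b \<Rightarrow> ('b,'g) edge list \<Rightarrow> 'b \<Rightarrow> bool" where
  "strict_parabolic_coding G act Pp Z E q0 es \<zeta> \<longleftrightarrow>
     q0 \<in> Z \<and> is_path_from E q0 es \<and> final_vtx q0 es \<in> parabolic_pts G act Pp \<and>
     \<zeta> = act (list_prod G (map lab es)) (final_vtx q0 es)"

end

theory Submission
  imports Defs
begin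

lemma lp_snoc:
  assumes "group G" "set xs \<subseteq> carrier G" "x \<in> carrier G"
  shows "list_prod G (xs @ [x]) = list_prod G xs \<otimes>\<^bsub>G\<^esub> x \<and> list_prod G xs \<in> carrier G"
  using assms(2)
proof (induction xs)
  case Nil then show ?case using assms by (simp add: group.is_monoid monoid.l_one monoid.r_one monoid.one_closed)
next
  case (Cons a xs)
  then show ?case using assms by (simp add: group.is_monoid monoid.m_assoc monoid.m_closed)
qed

lemma lp_label:
  assumes "group G" "\<forall>m<n. lab (e m) \<in> carrier G"
  shows "list_prod G (map lab (map e [0..<n])) = label_prod G e n \<and> label_prod G e n \<in> carrier G"
  using assms(2)
proof (induction n)
  case 0 then show ?case using assms by (simp add: group.is_monoid monoid.one_closed)
next
  case (Suc n)
  then have IH: "list_prod G (map lab (map e [0..<n])) = label_prod G e n" "label_prod G e n \<in> carrier G"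
    and c: "lab (e n) \<in> carrier G" by auto
  have "set (map lab (map e [0..<n])) \<subseteq> carrier G" using Suc.prems by auto
  then show ?case using lp_snoc[OF assms(1) _ c] IH c assms(1)
    by (simp add: group.is_monoid monoid.m_closed)
qed

theorem mainTheorem7:
  fixes G :: "('g,'m) monoid_scheme"
    and act :: "'g \<Rightarrow> 'b::metric_space \<Rightarrow> 'b"
    and Pp :: "'b set" and K :: "'b \<Rightarrow> 'b set"
    and D DPi \<epsilon> :: real
    and Z :: "'b set"
    and V W Vh Wh :: "'b \<Rightarrow> 'b set"
    and L :: "'b \<Rightarrow> 'g set"
  assumes grp: "group G"
    and fin_gen: "\<exists>S. finite S \<and> S \<subseteq> carrier G \<and> generate G S = carrier G"
    and bdry_compact: "compact (UNIV :: 'b set)"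
    and bdry_infinite: "infinite (UNIV :: 'b set)"
    and act_one: "\<forall>x. act \<one>\<^bsub>G\<^esub> x = x"
    and act_mult: "\<forall>g\<in>carrier G. \<forall>h\<in>carrier G. \<forall>x. act (g \<otimes>\<^bsub>G\<^esub> h) x = act g (act h x)"
    and act_cont: "\<forall>g\<in>carrier G. continuous_on UNIV (act g)"
    and Pp_fin: "finite Pp" and Pp_ne: "Pp \<noteq> {}"
    and Pp_inf: "\<forall>p\<in>Pp. infinite (stab G act p)"
    and D_pos: "D > 0"
    and D_sep: "\<forall>x y. x \<noteq> y \<longrightarrow> (\<exists>g\<in>carrier G. dist (act g x) (act g y) > D)"
    and K_prop: "\<forall>p\<in>Pp. compact (K p) \<and> p \<notin> K p \<and>
                   (\<Union>g\<in>stab G act p. act g ` K p) = UNIV - {p}"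
    and DPi_pos: "DPi > 0"
    and DPi_prop: "\<forall>p\<in>Pp. DPi < diameter (K p) \<and> DPi < infdist p (K p)"
    and eps_pos: "0 < \<epsilon>" and eps_bound: "\<epsilon> < min (D / 5) (DPi / 5)"
    and Z_fin: "finite Z"
    and opens: "\<forall>z\<in>Z. open (V z) \<and> open (W z) \<and> open (Vh z) \<and> open (Wh z)"
    and conical_data: "\<forall>z\<in>Z. z \<notin> parabolic_pts G act Pp \<longrightarrow>
         (\<exists>\<alpha>\<in>carrier G. L z = {\<alpha>} \<and> Vh z = act (inv\<^bsub>G\<^esub> \<alpha>) ` V z \<and> Wh z = act (inv\<^bsub>G\<^esub> \<alpha>) ` W z)"
    and parabolic_data: "\<forall>z\<in>Z. z \<in> parabolic_pts G act Pp \<longrightarrow>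
         (\<exists>g\<in>carrier G. \<exists>p\<in>Pp. \<exists>F. z = act g p \<and> finite F \<and>
            L z = l_coset G g (stab G act p) - F \<and>
            Vh z \<subseteq> Wh z \<and> Wh z \<subseteq> UNIV - {p} \<and> p \<notin> cnbhd \<epsilon> (Wh z))"
    and V_cover: "(\<Union>z\<in>Z. V z) = UNIV"
    and C1: "\<forall>z\<in>Z. diameter (W z) < \<epsilon>"
    and C2: "\<forall>z\<in>Z. diameter (Wh z) > 4 * \<epsilon>"
    and C3: "\<forall>z\<in>Z. cnbhd (2 * \<epsilon>) (Vh z) \<subseteq> Wh z"
    and C4: "\<forall>z\<in>Z. W z = {z} \<union> (\<Union>\<alpha>\<in>L z. act \<alpha> ` Wh z)"
    and C5: "\<forall>z\<in>Z. V z = {z} \<union> (\<Union>\<alpha>\<in>L z. act \<alpha> ` Vh z) \<and> closure (V z) \<subseteq> W z"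
    and C6: "\<forall>y\<in>Z. \<forall>z\<in>Z. (closure (Vh z) \<inter> closure (V y) = {}) \<longleftrightarrow> (Vh z \<inter> V y = {})"
  shows "\<forall>\<zeta>::'b.
           (\<exists>e. strict_conical_coding G act (automaton_edges Z L Vh V) W e \<zeta>) \<or>
           (\<exists>q0 es. strict_parabolic_coding G act Pp Z (automaton_edges Z L Vh V) q0 es \<zeta>)"
proof
  fix \<zeta> :: 'b
  let ?E = "automaton_edges Z L Vh V"
  let ?P = "parabolic_pts G act Pp"
  interpret grp: group G by (rule grp)
  have Lc: "\<forall>z\<in>Z. L z \<subseteq> carrier G"
  proof
    fix z assume z: "z \<in> Z"
    show "L z \<subseteq> carrier G"
    proof (cases "z \<in> ?P")
      case True
      then obtain g p F where "g \<in> carrier G" "L z = l_coset G g (stab G act p) - F"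
        using parabolic_data z by blast
      moreover have "stab G act p \<subseteq> carrier G" by (auto simp: stab_def)
      ultimately show ?thesis using grp.l_coset_subset_G by blast
    next
      case False then show ?thesis using conical_data z by auto
    qed
  qed
  have invact: "\<And>a x. a \<in> carrier G \<Longrightarrow> act (inv\<^bsub>G\<^esub> a) (act a x) = x"
    using act_mult act_one by (metis grp.inv_closed grp.l_inv)
  have invact2: "\<And>a x. a \<in> carrier G \<Longrightarrow> act a (act (inv\<^bsub>G\<^esub> a) x) = x"
    using act_mult act_one by (metis grp.inv_closed grp.r_inv)
  define ok where "ok = (\<lambda>s::'b\<times>'b. \<lambda>c::'g\<times>'b. fst c \<in> L (fst s) \<and> fst c \<in> carrier G \<and> snd c \<in> Z \<and>
      act (inv\<^bsub>G\<^esub> (fst c)) (snd s) \<in> Vh (fst s) \<and> act (inv\<^bsub>G\<^esub> (fst c)) (snd s) \<in> V (snd c))"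
  have exch: "\<exists>c. ok (z,x) c" if z: "z \<in> Z" and x: "x \<in> V z" and ns: "\<not> (x = z \<and> z \<in> ?P)" for z x
  proof -
    have "\<exists>a\<in>L z. a \<in> carrier G \<and> act (inv\<^bsub>G\<^esub> a) x \<in> Vh z"
    proof (cases "x = z")
      case True
      then have "z \<notin> ?P" using ns by auto
      then obtain a where a: "a \<in> carrier G" "L z = {a}" "Vh z = act (inv\<^bsub>G\<^esub> a) ` V z"
        using conical_data z by blast
      then show ?thesis using x by auto
    next
      case False
      then obtain a w where "a \<in> L z" "w \<in> Vh z" "x = act a w" using C5 z x by auto
      moreover have "a \<in> carrier G" using Lc z \<open>a \<in> L z\<close> by blast
      ultimately show ?thesis using invact by (intro bexI[of _ a]) auto
    qed
    then obtain a where a: "a \<in> L z" "a \<in> carrier G" "act (inv\<^bsub>G\<^esub> a) x \<in> Vh z" by blast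
    obtain y where "y \<in> Z" "act (inv\<^bsub>G\<^esub> a) x \<in> V y" using V_cover by blast
    then show ?thesis using a unfolding ok_def by (intro exI[of _ "(a,y)"]) auto
  qed
  define ch where "ch = (\<lambda>s. SOME c. ok s c)"
  obtain z0 where z0: "z0 \<in> Z" "\<zeta> \<in> V z0" using V_cover by blast
  define st where "st = rec_nat (z0, \<zeta>) (\<lambda>n s. (snd (ch s), act (inv\<^bsub>G\<^esub> (fst (ch s))) (snd s)))"
  have st0: "st 0 = (z0, \<zeta>)" and stS: "\<And>n. st (Suc n) = (snd (ch (st n)), act (inv\<^bsub>G\<^esub> (fst (ch (st n)))) (snd (st n)))"
    by (simp_all add: st_def)
  define e where "e = (\<lambda>n. (fst (st n), fst (ch (st n)), snd (ch (st n))))"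
  define stop where "stop = (\<lambda>n. snd (st n) = fst (st n) \<and> fst (st n) \<in> ?P)"
  have vtx_e: "\<And>k. vtx e k = fst (st k)"
    subgoal for k by (cases k) (simp_all add: vtx_def e_def src_def tgt_def stS st0)
    done
  have conn: "\<And>k. tgt (e k) = src (e (Suc k))"
    by (simp add: e_def src_def tgt_def stS)
  have inv: "(\<forall>m<n. e m \<in> ?E \<and> lab (e m) \<in> carrier G) \<and> fst (st n) \<in> Z \<and> snd (st n) \<in> V (fst (st n)) \<and>
     act (label_prod G e n) (snd (st n)) = \<zeta>" if "\<forall>m<n. \<not> stop m" for n
    using that
  proof (induction n)
    case 0 then show ?case using z0 st0 act_one by simp
  next
    case (Suc n)
    then have IH: "\<forall>m<n. e m \<in> ?E \<and> lab (e m) \<in> carrier G" "fst (st n) \<in> Z" "snd (st n) \<in> V (fst (st n))"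
       "act (label_prod G e n) (snd (st n)) = \<zeta>" and ns: "\<not> stop n" by auto
    have "\<exists>c. ok (st n) c" using exch[OF IH(2) IH(3)] ns unfolding stop_def by (cases "st n") auto
    then have okc: "ok (st n) (ch (st n))" unfolding ch_def by (rule someI_ex)
    have lc: "label_prod G e n \<in> carrier G" using lp_label[OF grp] IH(1) by blast
    have em: "e n \<in> ?E" "lab (e n) \<in> carrier G"
      using okc IH(2) unfolding ok_def automaton_edges_def e_def lab_def by auto
    have "act (label_prod G e (Suc n)) (snd (st (Suc n))) = act (label_prod G e n) (act (lab (e n)) (act (inv\<^bsub>G\<^esub> (lab (e n))) (snd (st n))))"
      using act_mult lc em(2) by (simp add: stS e_def lab_def)
    also have "\<dots> = \<zeta>" using invact2[OF em(2)] IH(4) by simp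
    finally have A: "act (label_prod G e (Suc n)) (snd (st (Suc n))) = \<zeta>" .
    have B: "fst (st (Suc n)) \<in> Z" "snd (st (Suc n)) \<in> V (fst (st (Suc n)))"
      using okc unfolding ok_def by (simp_all add: stS)
    have C: "\<forall>m<Suc n. e m \<in> ?E \<and> lab (e m) \<in> carrier G"
      using IH(1) em less_Suc_eq by auto
    show ?case using A B C by blast
  qed
  show "(\<exists>e. strict_conical_coding G act ?E W e \<zeta>) \<or>
           (\<exists>q0 es. strict_parabolic_coding G act Pp Z ?E q0 es \<zeta>)"
  proof (cases "\<exists>n. stop n")
    case False
    have "strict_conical_coding G act ?E W e \<zeta>"
      unfolding strict_conical_coding_def
    proof (intro conjI allI)
      fix k
      show "e k \<in> ?E" using inv[of "Suc k"] False by auto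
      show "tgt (e k) = src (e (Suc k))" by (rule conn)
      have i: "snd (st k) \<in> V (fst (st k))" "act (label_prod G e k) (snd (st k)) = \<zeta>" "fst (st k) \<in> Z"
        using inv[of k] False by auto
      then have "snd (st k) \<in> closure (W (fst (st k)))" using C5 closure_subset by blast
      then show "\<zeta> \<in> act (label_prod G e k) ` closure (W (vtx e k))" using i vtx_e by force
    qed
    then show ?thesis by blast
  next
    case True
    define n where "n = (LEAST n. stop n)"
    have sn: "stop n" unfolding n_def using True by (metis LeastI)
    have bef: "\<forall>m<n. \<not> stop m" unfolding n_def using not_less_Least by blast
    note I = inv[OF bef]
    have lp: "list_prod G (map lab (map e [0..<n])) = label_prod G e n"
      using lp_label[OF grp] I by blast
    have fv: "final_vtx z0 (map e [0..<n]) = fst (st n)"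
    proof (cases n)
      case 0 then show ?thesis by (simp add: final_vtx_def st0)
    next
      case (Suc k) then show ?thesis by (simp add: final_vtx_def e_def tgt_def stS)
    qed
    have "strict_parabolic_coding G act Pp Z ?E z0 (map e [0..<n]) \<zeta>"
      unfolding strict_parabolic_coding_def
    proof (intro conjI)
      show "z0 \<in> Z" by (rule z0)
      show "is_path_from ?E z0 (map e [0..<n])"
        unfolding is_path_from_def using I conn
        by (auto simp: hd_map e_def src_def st0 hd_upt)
      show "final_vtx z0 (map e [0..<n]) \<in> ?P" using fv sn stop_def by simp
      show "\<zeta> = act (list_prod G (map lab (map e [0..<n]))) (final_vtx z0 (map e [0..<n]))"
      proof -
        have "snd (st n) = fst (st n)" using sn unfolding stop_def by blast
        then show ?thesis using lp fv I by metis
      qed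
    qed
    then show ?thesis by blast
  qed
qed

end
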